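(* Let $\mathscr{M}_4(5)$ be the regular map on Bring's surface $\overline{\mathbb{H}/H_4(5)}$ whose vertices are labelled by Hecke--Farey coordinates modulo $5$. The map $z\mapsto z+\sqrt2$, applied to Hecke--Farey coordinates, induces a rotation of $\mathscr{M}_4(5)$ through angle $2\pi/5$ about the centre vertex $\frac{1}{0\sqrt2}$.
   Context: $H_4$ is the Hecke group generated by $T(z)=z+\sqrt2$ and $S(z)=-1/z$ on the upper half-plane $\mathbb{H}$. The universal 4-gonal map $\hat{\mathscr{M}}_4$ is the map on $\mathbb{H}$ whose vertices are the images of $\infty$ under $H_4$ (the real numbers $\frac{a}{c\sqrt2}$ and $\frac{b\sqrt2}{d}$ with $a,b,c,d\in\mathbb{Z}$, $\gcd(a,c)=\gcd(b,d)=1$, including $\infty$) and whose edges are the images of the imaginary axis under $H_4$; $\frac{a}{c\sqrt2}$ and $\frac{b\sqrt2}{d}$ are joined by an edge iff $ad-2bc=\pm1$. $H_4(5)$ is the principal congruence subgroup of level 5: transformations $z\mapsto\frac{az+b\sqrt2}{c\sqrt2 z+d}$ with $a,b,c,d\in\mathbb{Z}$, $ad-2bc=1$, $a\equiv d\equiv\pm1\pmod5$, $b\equiv c\equiv0\pmod5$. $\mathscr{M}_4(5)=\hat{\mathscr{M}}_4/H_4(5)$ is a regular map of type $\{5,4\}$ (quadrilateral faces, vertices of valency 5) with 30 vertices, 60 edges and 24 faces on the genus-4 surface $\overline{\mathbb{H}/H_4(5)}$ (Bring's surface). Its vertices are labelled by Hecke--Farey coordinates modulo 5: expressions $\frac{a}{c\sqrt2}$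 or $\frac{b\sqrt2}{d}$ with $a,b,c,d\in\mathbb{Z}_5$, where $\frac{a}{c\sqrt2}$ is identified with $\frac{-a}{-c\sqrt2}$ (and similarly for the other type); two such vertices $\frac{a}{c\sqrt2}$, $\frac{b\sqrt2}{d}$ are adjacent iff $ad-2bc\equiv\pm1\pmod5$. The vertex $\frac{1}{0\sqrt2}$ (image of $\infty$) is called the centre. *)

theory Defs
  imports Main "HOL-Library.Numeral_Type"
begin

text \<open>Hecke--Farey coordinates modulo 5.  A label is a triple (k, x, y) with x y in Z/5Z
 (the type 5 of HOL-Library.Numeral_Type).  k = False encodes the expression a/(c sqrt2)
 with (x,y) = (a,c); k = True encodes b sqrt2 / d with (x,y) = (b,d).
 A vertex of M_4(5) is the class of a label modulo the identification (x,y) ~ (-x,-y).\<close>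

type_synonym hf_label = "bool \<times> 5 \<times> 5"
type_synonym hf_vertex = "hf_label set"

definition hfv :: "bool \<Rightarrow> 5 \<Rightarrow> 5 \<Rightarrow> hf_vertex" where
  "hfv k x y = {(k, x, y), (k, -x, -y)}"

text \<open>Vertex set: all labels with (x,y) \<noteq> (0,0) (reductions of coprime pairs).\<close>
definition M45_vertices :: "hf_vertex set" where
  "M45_vertices = {hfv k x y | k x y. (x, y) \<noteq> (0, 0)}"

definition M45_adj :: "hf_vertex \<Rightarrow> hf_vertex \<Rightarrow> bool" where
  "M45_adj u v \<longleftrightarrow>
     (\<exists>a c b d. (False, a, c) \<in> u \<and> (True, b, d) \<in> v \<and>
        (a * d - 2 * b * c = 1 \<or> a * d - 2 * b * c = -1)) \<or>
     (\<exists>a c b d. (False, a, c) \<in> v \<and> (True, b, d) \<in> u \<and>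
        (a * d - 2 * b * c = 1 \<or> a * d - 2 * b * c = -1))"

text \<open>The centre 1/(0 sqrt2), image of infinity.\<close>
definition centre :: hf_vertex where
  "centre = hfv False 1 0"

text \<open>T(z) = z + sqrt2 on labels: a/(c sqrt2) + sqrt2 = (a+2c)/(c sqrt2),
  b sqrt2/d + sqrt2 = (b+d) sqrt2/d.\<close>
fun T_lab :: "hf_label \<Rightarrow> hf_label" where
  "T_lab (False, a, c) = (False, a + 2 * c, c)"
| "T_lab (True, b, d) = (True, b + d, d)"

text \<open>S(z) = -1/z on labels: -1/(a/(c sqrt2)) = (-c) sqrt2/a,
  -1/(b sqrt2/d) = (-d)/(b sqrt2).\<close>
fun S_lab :: "hf_label \<Rightarrow> hf_label" where
  "S_lab (False, a, c) = (True, -c, a)"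
| "S_lab (True, b, d) = (False, -d, b)"

definition T_vert :: "hf_vertex \<Rightarrow> hf_vertex" where
  "T_vert u = T_lab ` u"

definition S_vert :: "hf_vertex \<Rightarrow> hf_vertex" where
  "S_vert u = S_lab ` u"

text \<open>Faces of M_4(5): the images under H_4 (generated by T and S) of the
  fundamental quadrilateral face with vertices infinity, 0, 1/sqrt2, sqrt2
  (faces recorded by their vertex sets).\<close>
definition base_face :: "hf_vertex set" where
  "base_face = {hfv False 1 0, hfv True 0 1, hfv False 1 1, hfv True 1 1}"

inductive_set M45_faces :: "hf_vertex set set" where
  base: "base_face \<in> M45_faces"
| T: "F \<in> M45_faces \<Longrightarrow> T_vert ` F \<in> M45_faces"
| S: "F \<in> M45_faces \<Longrightarrow> S_vert ` F \<in> M45_faces"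

end

theory Submission
  imports Defs
begin

lemma five0: "(5::5) = 0" by simp
lemma ten0: "(10::5) = 0" by simp
lemma neq1: "(1::5) \<noteq> -1" by simp

fun Ti_lab :: "hf_label \<Rightarrow> hf_label" where
  "Ti_lab (False, a, c) = (False, a - 2 * c, c)"
| "Ti_lab (True, b, d) = (True, b - d, d)"

lemma T_Ti: "T_lab (Ti_lab x) = x" by (cases x; cases "fst x") auto
lemma Ti_T: "Ti_lab (T_lab x) = x" by (cases x; cases "fst x") auto

lemma mem_T: "x \<in> T_lab ` u \<longleftrightarrow> Ti_lab x \<in> u"
  by (metis T_Ti Ti_T image_iff)

lemma T5_lab: "T_lab (T_lab (T_lab (T_lab (T_lab x)))) = x"
proof (cases x)
  case (fields k a c)
  have "a + 2*c + 2*c + 2*c + 2*c + 2*c = a + 10 * c" by (simp add: algebra_simps)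
  moreover have "a + c + c + c + c + c = a + 5 * c" by (simp add: algebra_simps)
  ultimately show ?thesis using fields by (cases k) (auto simp: ten0 five0)
qed

lemma T5_vert: "(T_vert ^^ 5) u = u"
  by (simp add: numeral_eq_Suc T_vert_def image_image T5_lab)

lemma T_hfv: "T_vert (hfv False a c) = hfv False (a + 2*c) c"
  "T_vert (hfv True b d) = hfv True (b + d) d"
  by (auto simp: T_vert_def hfv_def algebra_simps)

lemma T_hfv_gen: "T_vert (hfv k x y) = hfv k (if k then x + y else x + 2*y) y"
  by (cases k) (simp_all add: T_hfv)

lemma T_vert_in: "u \<in> M45_vertices \<Longrightarrow> T_vert u \<in> M45_vertices"
proof -
  assume "u \<in> M45_vertices"
  then obtain k x y where u: "u = hfv k x y" "(x, y) \<noteq> (0, 0)"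
    unfolding M45_vertices_def by blast
  have "(if k then x + y else x + 2*y, y) \<noteq> (0, 0)" using u(2) by auto
  then show ?thesis unfolding M45_vertices_def u(1) T_hfv_gen by blast
qed

lemma T_iter_in: "u \<in> M45_vertices \<Longrightarrow> (T_vert ^^ n) u \<in> M45_vertices"
  by (induct n) (auto simp: T_vert_in)

lemma ex_shift:
  "(\<exists>a c b d. (False,a,c) \<in> T_lab`u \<and> (True,b,d) \<in> T_lab`v \<and> Q (a*d - 2*b*c)) \<longleftrightarrow>
   (\<exists>a c b d. (False,a,c) \<in> u \<and> (True,b,d) \<in> v \<and> Q (a*d - 2*b*c))"
proof
  assume "\<exists>a c b d. (False,a,c) \<in> T_lab`u \<and> (True,b,d) \<in> T_lab`v \<and> Q (a*d - 2*b*c)"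
  then obtain a c b d where h: "(False,a,c) \<in> T_lab`u" "(True,b,d) \<in> T_lab`v" "Q (a*d - 2*b*c)"
    by blast
  have e: "(a - 2*c)*d - 2*(b-d)*c = a*d - 2*b*c" by (simp add: algebra_simps)
  show "\<exists>a c b d. (False,a,c) \<in> u \<and> (True,b,d) \<in> v \<and> Q (a*d - 2*b*c)"
    apply (rule exI[of _ "a - 2*c"], rule exI[of _ c], rule exI[of _ "b - d"], rule exI[of _ d])
    using h e by (simp add: mem_T)
next
  assume "\<exists>a c b d. (False,a,c) \<in> u \<and> (True,b,d) \<in> v \<and> Q (a*d - 2*b*c)"
  then obtain a c b d where h: "(False,a,c) \<in> u" "(True,b,d) \<in> v" "Q (a*d - 2*b*c)"
    by blast
  have e: "(a + 2*c)*d - 2*(b+d)*c = a*d - 2*b*c" by (simp add: algebra_simps)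
  show "\<exists>a c b d. (False,a,c) \<in> T_lab`u \<and> (True,b,d) \<in> T_lab`v \<and> Q (a*d - 2*b*c)"
    apply (rule exI[of _ "a + 2*c"], rule exI[of _ c], rule exI[of _ "b + d"], rule exI[of _ d])
    using h e by (simp add: mem_T)
qed

lemma adj_T: "M45_adj (T_vert u) (T_vert v) \<longleftrightarrow> M45_adj u v"
  unfolding M45_adj_def T_vert_def
  using ex_shift[of u v "\<lambda>x. x = 1 \<or> x = -1"] ex_shift[of v u "\<lambda>x. x = 1 \<or> x = -1"]
  by simp

lemma faces_iter: "F \<in> M45_faces \<Longrightarrow> ((\<lambda>G. T_vert ` G) ^^ n) F \<in> M45_faces"
  by (induct n) (auto intro: M45_faces.T)

lemma img_iter: "((\<lambda>G. T_vert ` G) ^^ n) F = (T_vert ^^ n) ` F"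
  by (induct n) (auto simp: image_image)

lemma centre_fix: "T_vert centre = centre"
  by (simp add: centre_def T_hfv)

lemma base_iter: "{centre, hfv True (of_nat n) 1, hfv True (of_nat n + 1) 1}
   \<subseteq> ((\<lambda>G. T_vert ` G) ^^ n) base_face"
proof (induct n)
  case 0 then show ?case by (simp add: base_face_def centre_def)
next
  case (Suc n)
  then have "T_vert ` {centre, hfv True (of_nat n) 1, hfv True (of_nat n + 1) 1}
     \<subseteq> ((\<lambda>G. T_vert ` G) ^^ Suc n) base_face" by auto
  then show ?case by (simp add: centre_fix T_hfv add.commute add.left_commute)
qed

lemma all5_of_nat: "\<exists>n. (b::5) = of_nat n"
proof (induct b rule: bit1_induct)
  case (of_int z)
  then show ?case by (metis of_nat_nat)
qed

theorem lemma1: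
  shows "bij_betw T_vert M45_vertices M45_vertices
    \<and> (\<forall>u\<in>M45_vertices. \<forall>v\<in>M45_vertices. M45_adj (T_vert u) (T_vert v) \<longleftrightarrow> M45_adj u v)
    \<and> (\<forall>F. F \<subseteq> M45_vertices \<longrightarrow> (T_vert ` F \<in> M45_faces \<longleftrightarrow> F \<in> M45_faces))
    \<and> T_vert centre = centre
    \<and> (\<forall>u\<in>M45_vertices. M45_adj centre u \<longrightarrow>
          T_vert u \<noteq> u \<and> (\<exists>F\<in>M45_faces. {centre, u, T_vert u} \<subseteq> F))
    \<and> (\<forall>u\<in>M45_vertices. (T_vert ^^ 5) u = u)"
proof (intro conjI)
  have T4: "T_vert ((T_vert ^^ 4) u) = u" "(T_vert ^^ 4) (T_vert u) = u" for u
    using T5_vert[of u] by (simp_all add: numeral_eq_Suc funpow_swap1)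
  show "bij_betw T_vert M45_vertices M45_vertices"
  proof (rule bij_betw_imageI)
    show "inj_on T_vert M45_vertices" by (metis T4(2) inj_onI)
    show "T_vert ` M45_vertices = M45_vertices"
    proof
      show "T_vert ` M45_vertices \<subseteq> M45_vertices" using T_vert_in by auto
      show "M45_vertices \<subseteq> T_vert ` M45_vertices"
        using T4(1) T_iter_in by (metis image_eqI subsetI)
    qed
  qed
  show "\<forall>u\<in>M45_vertices. \<forall>v\<in>M45_vertices. M45_adj (T_vert u) (T_vert v) \<longleftrightarrow> M45_adj u v"
    by (simp add: adj_T)
  show "\<forall>F. F \<subseteq> M45_vertices \<longrightarrow> (T_vert ` F \<in> M45_faces \<longleftrightarrow> F \<in> M45_faces)"
  proof (intro allI impI iffI)
    fix F assume "T_vert ` F \<in> M45_faces"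
    then have "((\<lambda>G. T_vert ` G) ^^ 4) (T_vert ` F) \<in> M45_faces" by (rule faces_iter)
    then show "F \<in> M45_faces" by (simp add: img_iter image_image T4)
  qed (rule M45_faces.T)
  show "T_vert centre = centre" by (rule centre_fix)
  show "\<forall>u\<in>M45_vertices. (T_vert ^^ 5) u = u" by (simp add: T5_vert)
  show "\<forall>u\<in>M45_vertices. M45_adj centre u \<longrightarrow>
          T_vert u \<noteq> u \<and> (\<exists>F\<in>M45_faces. {centre, u, T_vert u} \<subseteq> F)"
  proof (intro ballI impI)
    fix u assume uv: "u \<in> M45_vertices" and adj: "M45_adj centre u"
    obtain k x y where u: "u = hfv k x y" using uv unfolding M45_vertices_def by blast
    obtain b d where bd: "(True, b, d) \<in> u" "d = 1 \<or> -d = 1"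
      using adj unfolding M45_adj_def centre_def hfv_def by auto
    obtain b' where ub: "u = hfv True b' 1"
    proof -
      have "k = True" "(x = b \<and> y = d) \<or> (x = -b \<and> y = -d)"
        using bd(1) u unfolding hfv_def by auto
      then have "u = hfv True b d"
        using u unfolding hfv_def by auto
      moreover have "-d = 1 \<Longrightarrow> hfv True b d = hfv True (-b) 1"
      proof -
        assume "-d = 1" then have "d = -1" by (metis minus_minus)
        then show ?thesis unfolding hfv_def by auto
      qed
      ultimately show ?thesis using that bd(2) by metis
    qed
    obtain n where n: "b' = of_nat n" using all5_of_nat by blast
    show "T_vert u \<noteq> u \<and> (\<exists>F\<in>M45_faces. {centre, u, T_vert u} \<subseteq> F)"
    proof
      show "T_vert u \<noteq> u"
      proof
        assume eq: "T_vert u = u"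
        have "(True, b' + 1, 1) \<in> T_vert u" unfolding ub T_hfv(2) by (simp add: hfv_def)
        then have "(True, b' + 1, (1::5)) \<in> hfv True b' 1" using eq ub by simp
        then have "b' + 1 = b' \<or> (1::5) = -1" unfolding hfv_def by auto
        then show False by simp
      qed
      have S: "{centre, u, T_vert u} = {centre, hfv True (of_nat n) 1, hfv True (of_nat n + 1) 1}"
        unfolding ub n T_hfv by simp
      show "\<exists>F\<in>M45_faces. {centre, u, T_vert u} \<subseteq> F"
        unfolding S using base_iter[of n] faces_iter[OF M45_faces.base, of n] by blast
    qed
  qed
qed

end
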